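(* Let $\mathbf{F}$ be a field of characteristic $3$, let $\lambda=(\lambda_1,\lambda_2)$ be a partition, $m=\lambda_1-\lambda_2$, and let $g\in\mathbf{N}_0$ with $B(m,g)\not\equiv0\pmod3$. Then in $S_\mathbf{F}(\lambda)$ \[e_{m,g}=B(m,g)\,b(g)+\sum_{i>g}\alpha_i b(i)\] for some $\alpha_i\in\mathbf{F}_3$. In particular $e_{m,g}\neq0$ in $S_\mathbf{F}(\lambda)$ if and only if $g\le\lambda_2$.
   Context: $S_\mathbf{F}(\lambda)=\operatorname{End}_{\mathbf{F}S_r}(M^\lambda)$ is a commutative $\mathbf{F}$-algebra with basis $b(0)=\mathbf{1},\dots,b(\lambda_2)$ and multiplication $b(i)b(j)=\sum_{h=\max\{i,j\}}^{i+j}\binom{h}{i}\binom{h}{j}\binom{m+i+j}{i+j-h}b(h)$, $b(a)=0$ for $a>\lambda_2$. $B(m,g)=\binom{m+2g}{g}$. With base-3 digits $(m+2g)_u,g_u$, let $I^{(0)}=\{u: g_u=0,(m+2g)_u=0\}$, $J^{(0)}=\{u:g_u=1,(m+2g)_u=2\}$, $I^{(1)}=\{u:g_u=0,(m+2g)_u=1\}$, $J^{(1)}=\{u:g_u=2,(m+2g)_u=2\}$, $I^{(2)}=\{u:g_u=0,(m+2g)_u=2\}$, $J^{(2)}=\{u:g_u=1,(m+2g)_u=1\}$ and \[e_{m,g}=\prod_{u\in I^{(0)}}(\mathbf{1}+b(3^u)-b(2\cdot3^u))\prod_{u\in J^{(0)}}(b(2\cdot3^u)-b(3^u))\prod_{u\in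 I^{(1)}}(\mathbf{1}-b(2\cdot3^u))\prod_{u\in J^{(1)}}b(2\cdot3^u)\prod_{u\in I^{(2)}}(\mathbf{1}-b(3^u)+b(2\cdot3^u))\prod_{u\in J^{(2)}}(b(3^u)-b(2\cdot3^u)),\] with $b(a)=0$ for $a>\lambda_2$. Here $B(m,g)$ is read as an element of $\mathbf{F}_3\subseteq\mathbf{F}$. *)

theory Defs
  imports Main
begin

text \<open>Elements of S_F(lambda) are represented by coefficient functions c :: nat => 'a,
  standing for sum_{i <= l2} c i * b(i); coefficients at indices > l2 are zero
  (b(a) = 0 for a > lambda_2).\<close>

definition sbasis :: "nat \<Rightarrow> nat \<Rightarrow> nat \<Rightarrow> 'a::field" where
  "sbasis l2 a = (\<lambda>j. if j = a \<and> a \<le> l2 then 1 else 0)"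

definition sone :: "nat \<Rightarrow> nat \<Rightarrow> 'a::field" where
  "sone l2 = sbasis l2 0"

definition sadd :: "(nat \<Rightarrow> 'a::field) \<Rightarrow> (nat \<Rightarrow> 'a) \<Rightarrow> nat \<Rightarrow> 'a" where
  "sadd x y = (\<lambda>h. x h + y h)"

definition ssub :: "(nat \<Rightarrow> 'a::field) \<Rightarrow> (nat \<Rightarrow> 'a) \<Rightarrow> nat \<Rightarrow> 'a" where
  "ssub x y = (\<lambda>h. x h - y h)"

text \<open>Structure constant: b(i) b(j) = sum_{h=max i j}^{i+j} C(h,i) C(h,j) C(m+i+j, i+j-h) b(h).\<close>
definition scoef :: "nat \<Rightarrow> nat \<Rightarrow> nat \<Rightarrow> nat \<Rightarrow> nat" where
  "scoef m i j h = (if max i j \<le> h \<and> h \<le> i + j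
      then (h choose i) * (h choose j) * ((m + i + j) choose (i + j - h)) else 0)"

definition smult :: "nat \<Rightarrow> nat \<Rightarrow> (nat \<Rightarrow> 'a::field) \<Rightarrow> (nat \<Rightarrow> 'a) \<Rightarrow> nat \<Rightarrow> 'a" where
  "smult l2 m x y = (\<lambda>h. if h \<le> l2 then
      (\<Sum>i\<le>l2. \<Sum>j\<le>l2. x i * y j * of_nat (scoef m i j h)) else 0)"

definition digit3 :: "nat \<Rightarrow> nat \<Rightarrow> nat" where
  "digit3 n u = n div 3 ^ u mod 3"

definition efactor :: "nat \<Rightarrow> nat \<Rightarrow> nat \<Rightarrow> nat \<Rightarrow> nat \<Rightarrow> 'a::field" where
  "efactor l2 m g u =
    (let gu = digit3 g u; nu = digit3 (m + 2 * g) u;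
         b1 = sbasis l2 (3 ^ u); b2 = sbasis l2 (2 * 3 ^ u); one = sone l2 in
     if gu = 0 \<and> nu = 0 then ssub (sadd one b1) b2
     else if gu = 1 \<and> nu = 2 then ssub b2 b1
     else if gu = 0 \<and> nu = 1 then ssub one b2
     else if gu = 2 \<and> nu = 2 then b2
     else if gu = 0 \<and> nu = 2 then sadd (ssub one b1) b2
     else if gu = 1 \<and> nu = 1 then ssub b1 b2
     else one)"

text \<open>For u >= m + 2g + l2 + 1 we have
  3^u > l2 and both digits are 0, so the factor is 1 + b(3^u) - b(2*3^u) = 1; hence
  the (formally infinite) product equals the finite product over u < m + 2g + l2 + 1.\<close>
definition eelem :: "nat \<Rightarrow> nat \<Rightarrow> nat \<Rightarrow> nat \<Rightarrow> 'a::field" where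
  "eelem l2 m g = foldr (\<lambda>u acc. smult l2 m (efactor l2 m g u) acc)
                     [0..<m + 2 * g + l2 + 1] (sone l2)"

end

theory Submission imports Defs "HOL-Computational_Algebra.Computational_Algebra" begin

lemma coeff_11_power: "coeff ([:1,1:] ^ n :: 'a::comm_semiring_1 poly) i = of_nat (n choose i)"
proof (cases "i \<le> n")
  case True then show ?thesis using coeff_linear_poly_power[OF True, of 1 1] by simp
next
  case False
  have "degree ([:1,1:] ^ n :: 'a poly) \<le> n"
    by (rule order.trans[OF degree_power_le]) (simp add: degree_pCons_le)
  then show ?thesis using False by (simp add: coeff_eq_0 binomial_eq_0)
qed

lemma lucas_step:
  fixes A B r s k :: nat
  assumes p: "prime CHAR('a::field)" and r: "r < CHAR('a)^k" and s: "s < CHAR('a)^k"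
  shows "(of_nat ((CHAR('a)^k*A + r) choose (CHAR('a)^k*B + s)) :: 'a)
          = of_nat (A choose B) * of_nat (r choose s)"
proof -
  define q where "q = CHAR('a)^k"
  define X where "X = ([:1,1:] :: 'a poly)"
  have X1: "X = 1 + monom 1 1" by (simp add: X_def monom_Suc one_pCons)
  have pq: "prime CHAR('a poly)" using p by simp
  have Xq: "X ^ q = 1 + monom 1 q"
    unfolding X1 q_def
    by (subst comm_semiring_1_class.freshmans_dream'[OF pq]) (auto simp: monom_power)
  have "X ^ (q*A + r) = (1 + monom 1 q) ^ A * X ^ r"
    by (simp add: power_add power_mult Xq)
  also have "(1 + monom 1 q) ^ A = (\<Sum>t\<le>A. of_nat (A choose t) * monom 1 (q*t) :: 'a poly)"
    by (subst add.commute, subst binomial_ring) (simp add: monom_power mult.commute)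
  finally have E: "X ^ (q*A + r) = (\<Sum>t\<le>A. smult (of_nat (A choose t)) (monom 1 (q*t) * X ^ r))"
    by (simp add: sum_distrib_right mult.assoc of_nat_mult_conv_smult)
  have "coeff (X ^ (q*A + r)) (q*B+s) = (\<Sum>t\<le>A. of_nat (A choose t) * (if q*B+s < q*t then 0 else coeff (X^r) (q*B+s - q*t)))"
    unfolding E coeff_sum by (auto simp: coeff_monom_mult intro!: sum.cong)
  also have "\<dots> = (\<Sum>t\<le>A. if t = B then of_nat (A choose B) * of_nat (r choose s) else 0)"
  proof (rule sum.cong[OF refl])
    fix t assume "t \<in> {..A}"
    have qpos: "q > 0" using p by (simp add: q_def prime_gt_0_nat)
    show "of_nat (A choose t) * (if q*B+s < q*t then 0 else coeff (X^r) (q*B+s - q*t)) =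
          (if t = B then of_nat (A choose B) * of_nat (r choose s) else (0::'a))"
    proof (cases "t = B")
      case True then show ?thesis by (simp add: X_def coeff_11_power)
    next
      case False
      show ?thesis
      proof (cases "q*B+s < q*t")
        case True then show ?thesis using False by simp
      next
        case nl: False
        then have "q*t < q * Suc B" using s unfolding q_def[symmetric] by simp
        then have "t < Suc B" by (metis mult_less_cancel1)
        then have "t < B" using False by simp
        then have "q*(Suc t) \<le> q*B" by (intro mult_le_mono2) simp
        then have "q*t + q \<le> q*B" by simp
        then have "r < q*B+s - q*t" using r unfolding q_def[symmetric] by linarith
        then show ?thesis using False nl by (simp add: X_def coeff_11_power binomial_eq_0)
      qed
    qed
  qed
  also have "\<dots> = of_nat (A choose B) * of_nat (r choose s)"
    by (simp add: binomial_eq_0)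
  finally show ?thesis by (simp add: X_def coeff_11_power q_def)
qed

lemma prime3: "prime (3::nat)"
proof -
  have "{2..<3::nat} = {2}" by auto
  then show ?thesis by (simp add: prime_nat_iff')
qed

lemma lucas3:
  assumes c: "CHAR('a::field) = 3" and r: "r < 3^k" and s: "s < 3^k"
  shows "(of_nat ((3^k*A + r) choose (3^k*B + s)) :: 'a) = of_nat (A choose B) * of_nat (r choose s)"
  using lucas_step[where 'a='a, of r k s A B] c r s prime3 by simp

lemma scoef_digit:
  assumes c: "CHAR('a::field) = 3" and d: "d < 3" and j: "3^(Suc k) dvd j"
  shows "(of_nat (scoef m (d*3^k) j h) :: 'a) = (if h = d*3^k + j then 1 else 0)"
proof (cases "d = 0")
  case True then show ?thesis by (auto simp: scoef_def)
next
  case False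
  define i where "i = d*3^k"
  have ipos: "0 < i" using False by (simp add: i_def)
  have ilt: "i < 3^Suc k" using d by (simp add: i_def)
  obtain a where a: "j = 3^Suc k * a" using j by blast
  show ?thesis
  proof (cases "max i j \<le> h \<and> h \<le> i + j")
    case False then show ?thesis by (auto simp: scoef_def i_def[symmetric])
  next
    case True
    define r where "r = h - j"
    have hr: "h = 3^Suc k * a + r" and ri: "r \<le> i" using True by (auto simp: r_def a)
    have rlt: "r < 3^Suc k" using ri ilt by simp
    have c1: "(of_nat (h choose i) :: 'a) = of_nat (r choose i)"
      using lucas3[OF c rlt ilt, of a 0] by (simp add: hr)
    have c2: "(of_nat (h choose j) :: 'a) = 1"
      using lucas3[OF c rlt, of 0 a a] by (simp add: hr a)
    show ?thesis
    proof (cases "r = i")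
      case True
      then have "h = i + j" using hr a by simp
      then show ?thesis using c2 c1 True by (simp add: scoef_def i_def[symmetric] of_nat_mult)
    next
      case False
      then have "r < i" using ri by simp
      then have "(of_nat (h choose i) :: 'a) = 0" using c1 by (simp add: binomial_eq_0)
      moreover have "h \<noteq> i + j" using \<open>r < i\<close> hr a by simp
      ultimately show ?thesis using True by (simp add: scoef_def i_def[symmetric] of_nat_mult)
    qed
  qed
qed

definition cvi :: "nat \<Rightarrow> nat \<Rightarrow> nat \<Rightarrow> int" where
  "cvi gu nu d =
    (if gu = 0 \<and> nu = 0 then [1,1,-1] ! d
     else if gu = 1 \<and> nu = 2 then [0,-1,1] ! d
     else if gu = 0 \<and> nu = 1 then [1,0,-1] ! d
     else if gu = 2 \<and> nu = 2 then [0,0,1] ! d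
     else if gu = 0 \<and> nu = 2 then [1,-1,1] ! d
     else if gu = 1 \<and> nu = 1 then [0,1,-1] ! d
     else [1,0,0] ! d)"

lemma efactor_eq:
  "(efactor l2 m g u i :: 'a::field) = (if i \<le> l2 \<and> 3^u dvd i \<and> i div 3^u < 3
      then of_int (cvi (digit3 g u) (digit3 (m + 2*g) u) (i div 3^u)) else 0)"
proof -
  have p: "(3::nat)^u > 0" by simp
  have "i = 0 \<or> i = 3^u \<or> i = 2*3^u \<or> \<not> (3^u dvd i \<and> i div 3^u < 3)"
  proof (rule ccontr)
    assume nt: "\<not> ?thesis"
    then obtain t where "i = 3^u * t" "t < 3" by (auto elim!: dvdE)
    then show False using nt by (auto simp: less_Suc_eq numeral_3_eq_3)
  qed
  moreover have "3^u \<noteq> (0::nat)" "2*3^u \<noteq> (0::nat)" "2*3^u \<noteq> (3::nat)^u" by auto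
  ultimately show ?thesis
    by (auto simp: efactor_def Let_def sbasis_def sone_def sadd_def ssub_def cvi_def)
qed

lemma smult_step:
  assumes c: "CHAR('a::field) = 3"
    and x: "\<And>i. x i = (if i \<le> l2 \<and> 3^k dvd i \<and> i div 3^k < 3 then X (i div 3^k) else (0::'a))"
    and y: "\<And>j. y j = (if j \<le> l2 \<and> 3^(Suc k) dvd j then Y j else (0::'a))"
  shows "Defs.smult l2 m x y h = (if h \<le> l2 \<and> 3^k dvd h
            then X (digit3 h k) * Y (h - digit3 h k * 3^k) else 0)"
proof (cases "h \<le> l2")
  case False then show ?thesis by (simp add: Defs.smult_def)
next
  case hl: True
  define q where "q = (3::nat)^Suc k"
  define i0 where "i0 = h mod q"
  have qpos: "q > 0" by (simp add: q_def)
  have T: "x i * y j * of_nat (scoef m i j h) = (if j = h - i \<and> i \<le> h then x i * y j else 0)" for i j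
  proof (cases "x i = 0 \<or> y j = 0")
    case True then show ?thesis by auto
  next
    case False
    then have xi: "i \<le> l2 \<and> 3^k dvd i \<and> i div 3^k < 3" and yj: "3^(Suc k) dvd j"
      using x[of i] y[of j] by (auto split: if_splits)
    then have ie: "i = (i div 3^k) * 3^k" by simp
    have "(of_nat (scoef m i j h) :: 'a) = (if h = i + j then 1 else 0)"
      using scoef_digit[OF c _ yj, of "i div 3^k" m h] xi ie by simp
    then show ?thesis by auto
  qed
  have "Defs.smult l2 m x y h = (\<Sum>i\<le>l2. \<Sum>j\<le>l2. (if j = h - i \<and> i \<le> h then x i * y j else 0))"
    using hl by (simp add: Defs.smult_def T)
  also have "\<dots> = (\<Sum>i\<le>l2. if i \<le> h then x i * y (h - i) else 0)"
  proof (rule sum.cong[OF refl])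
    fix i assume "i \<in> {..l2}"
    have "(\<Sum>j\<le>l2. (if j = h - i \<and> i \<le> h then x i * y j else 0)) =
          (\<Sum>j\<le>l2. (if j = h - i then (if i \<le> h then x i * y j else 0) else 0))"
      by (rule sum.cong) auto
    also have "\<dots> = (if i \<le> h then x i * y (h - i) else 0)" using hl by auto
    finally show "(\<Sum>j\<le>l2. (if j = h - i \<and> i \<le> h then x i * y j else 0)) = (if i \<le> h then x i * y (h - i) else 0)" .
  qed
  also have "\<dots> = (\<Sum>i\<le>l2. if i = i0 then x i0 * y (h - i0) else 0)"
  proof (rule sum.cong[OF refl])
    fix i assume "i \<in> {..l2}"
    show "(if i \<le> h then x i * y (h - i) else 0) = (if i = i0 then x i0 * y (h - i0) else 0)"
    proof (cases "i \<le> h \<and> x i \<noteq> 0 \<and> y (h - i) \<noteq> 0")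
      case True
      then have xi: "3^k dvd i \<and> i div 3^k < 3" and yj: "q dvd (h - i)"
        using x[of i] y[of "h - i"] by (auto split: if_splits simp: q_def)
      then have "i < q" unfolding q_def
        by (metis dvd_mult_div_cancel mult.commute mult_less_cancel2 power_Suc zero_less_power
            zero_less_numeral less_imp_le_nat)
      moreover have "h = (h - i) + i" using True by simp
      ultimately have "i0 = i" unfolding i0_def using yj
        by (metis mod_add_left_eq mod_0_imp_dvd dvd_imp_mod_0 add_0 mod_less)
      then show ?thesis using True by simp
    next
      case False
      then show ?thesis
        by (cases "i = i0") (auto simp: i0_def)
    qed
  qed
  also have "\<dots> = x i0 * y (h - i0)"
  proof -
    have "i0 \<le> h" by (simp add: i0_def)
    then show ?thesis using hl by simp
  qed
  also have "\<dots> = (if 3^k dvd h then X (digit3 h k) * Y (h - digit3 h k * 3^k) else 0)"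
  proof (cases "3^k dvd h")
    case True
    have i0e: "i0 = digit3 h k * 3^k"
      unfolding i0_def q_def digit3_def power_Suc2
      using mod_mult2_eq[of h "3^k" 3] True by (simp add: mult.commute)
    have "i0 \<le> h" by (simp add: i0_def)
    have "q dvd h - i0" unfolding i0_def by (simp add: minus_mod_eq_mult_div[symmetric])
    then have yv: "y (h - i0) = Y (h - i0)" using y[of "h - i0"] hl by (simp add: q_def)
    have "x i0 = X (digit3 h k)" using x[of i0] i0e \<open>i0 \<le> h\<close> hl by (simp add: digit3_def)
    then show ?thesis using yv True i0e by simp
  next
    case False
    have "\<not> 3^k dvd i0"
    proof
      assume "3^k dvd i0"
      moreover have "3^k dvd h - i0" unfolding i0_def q_def
        by (metis dvd_mult_right minus_mod_eq_mult_div power_Suc2 dvd_mult2 dvd_refl) 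
      ultimately have "3^k dvd (h - i0) + i0" by (rule dvd_add[rotated])
      then show False using False by (simp add: i0_def)
    qed
    then show ?thesis using x[of i0] False by simp
  qed
  finally show ?thesis using hl by simp
qed

lemma digit_shift:
  assumes "3^n dvd (h::nat)" "Suc n \<le> u"
  shows "digit3 (h - digit3 h n * 3^n) u = digit3 h u"
proof -
  have e: "digit3 h n * 3^n = h mod 3^Suc n"
    unfolding digit3_def power_Suc2
    using mod_mult2_eq[of h "3^n" 3] assms(1) by (simp add: mult.commute)
  have "h - h mod 3^Suc n = 3^Suc n * (h div 3^Suc n)" by (simp add: minus_mod_eq_mult_div)
  moreover obtain t where t: "u = Suc n + t" using assms(2) le_Suc_ex by blast
  ultimately have "(h - h mod 3^Suc n) div 3^u = h div 3^u"
    by (simp add: power_add div_mult2_eq)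
  then show ?thesis using e by (simp add: digit3_def)
qed

lemma tail:
  fixes l2 m g N :: nat
  assumes c: "CHAR('a::field) = 3" and lN: "l2 < 3^N" and kN: "k \<le> N"
  shows "\<forall>h. (foldr (\<lambda>u acc. Defs.smult l2 m (efactor l2 m g u) acc) [k..<N] (sone l2) :: nat \<Rightarrow> 'a) h
     = (if h \<le> l2 \<and> 3^k dvd h then
          of_int (\<Prod>u\<in>{k..<N}. cvi (digit3 g u) (digit3 (m+2*g) u) (digit3 h u)) else 0)"
  using kN
proof (induction k rule: inc_induct)
  case base
  show ?case
  proof
    fix h
    have "h \<le> l2 \<and> 3^N dvd h \<longleftrightarrow> h = 0"
    proof
      assume "h \<le> l2 \<and> 3^N dvd h"
      then have "h < 3^N" "3^N dvd h" using lN by auto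
      then show "h = 0" using dvd_imp_le by fastforce
    qed auto
    then show "(foldr (\<lambda>u acc. Defs.smult l2 m (efactor l2 m g u) acc) [N..<N] (sone l2) :: nat \<Rightarrow> 'a) h
     = (if h \<le> l2 \<and> 3^N dvd h then
          of_int (\<Prod>u\<in>{N..<N}. cvi (digit3 g u) (digit3 (m+2*g) u) (digit3 h u)) else 0)"
      by (auto simp: sone_def sbasis_def)
  qed
next
  case (step n)
  define Y where "Y = (\<lambda>j. (of_int (\<Prod>u\<in>{Suc n..<N}. cvi (digit3 g u) (digit3 (m+2*g) u) (digit3 j u)) :: 'a))"
  define X where "X = (\<lambda>d. (of_int (cvi (digit3 g n) (digit3 (m+2*g) n) d) :: 'a))"
  have up: "[n..<N] = n # [Suc n..<N]" using step(2) by (simp add: upt_conv_Cons)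
  show ?case
  proof
    fix h
    have "(foldr (\<lambda>u acc. Defs.smult l2 m (efactor l2 m g u) acc) [n..<N] (sone l2) :: nat \<Rightarrow> 'a) h
      = Defs.smult l2 m (efactor l2 m g n) (foldr (\<lambda>u acc. Defs.smult l2 m (efactor l2 m g u) acc) [Suc n..<N] (sone l2)) h"
      by (simp add: up)
    also have "\<dots> = (if h \<le> l2 \<and> 3^n dvd h then X (digit3 h n) * Y (h - digit3 h n * 3^n) else 0)"
      by (rule smult_step[OF c]) (auto simp: efactor_eq X_def Y_def step.IH)
    also have "\<dots> = (if h \<le> l2 \<and> 3^n dvd h then
          of_int (\<Prod>u\<in>{n..<N}. cvi (digit3 g u) (digit3 (m+2*g) u) (digit3 h u)) else 0)"
    proof (cases "h \<le> l2 \<and> 3^n dvd h")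
      case True
      have "Y (h - digit3 h n * 3^n) = of_int (\<Prod>u\<in>{Suc n..<N}. cvi (digit3 g u) (digit3 (m+2*g) u) (digit3 h u))"
        unfolding Y_def using True by (auto intro!: arg_cong[where f=of_int] prod.cong simp: digit_shift)
      moreover have "{n..<N} = insert n {Suc n..<N}" using step(2) by auto
      ultimately show ?thesis using True by (simp add: X_def)
    qed auto
    finally show "(foldr (\<lambda>u acc. Defs.smult l2 m (efactor l2 m g u) acc) [n..<N] (sone l2) :: nat \<Rightarrow> 'a) h
     = (if h \<le> l2 \<and> 3^n dvd h then
          of_int (\<Prod>u\<in>{n..<N}. cvi (digit3 g u) (digit3 (m+2*g) u) (digit3 h u)) else 0)" .
  qed
qed

lemma eelem_eq:
  assumes c: "CHAR('a::field) = 3"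
  shows "(eelem l2 m g :: nat \<Rightarrow> 'a) h = (if h \<le> l2 then
     of_int (\<Prod>u<m + 2 * g + l2 + 1. cvi (digit3 g u) (digit3 (m+2*g) u) (digit3 h u)) else 0)"
proof -
  define N where "N = m + 2 * g + l2 + 1"
  have "N < 2^N" by (rule less_exp)
  also have "(2::nat)^N \<le> 3^N" by (rule power_mono) auto
  finally have "l2 < 3^N" unfolding N_def by simp
  from tail[OF c this, of 0 m g] show ?thesis
    unfolding eelem_def N_def[symmetric] by (simp add: atLeast0LessThan)
qed

lemma digit3_Suc: "digit3 n (Suc u) = digit3 (n div 3) u"
  by (simp add: digit3_def div_mult2_eq mult.commute)

lemma digit3_0: "digit3 n 0 = n mod 3" by (simp add: digit3_def)

lemma digit3_lt: "digit3 n u < 3" by (simp add: digit3_def)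

lemma lucas_full:
  assumes c: "CHAR('a::field) = 3"
  shows "n < 3^N \<Longrightarrow> g < 3^N \<Longrightarrow>
    (of_nat (n choose g) :: 'a) = (\<Prod>u<N. of_nat (digit3 n u choose digit3 g u))"
proof (induction N arbitrary: n g)
  case 0 then show ?case by simp
next
  case (Suc N)
  have "(of_nat (n choose g) :: 'a) = of_nat ((3^1 * (n div 3) + n mod 3) choose (3^1 * (g div 3) + g mod 3))"
    by simp
  also have "\<dots> = of_nat ((n div 3) choose (g div 3)) * of_nat ((n mod 3) choose (g mod 3))"
    by (rule lucas3[OF c]) auto
  also have "of_nat ((n div 3) choose (g div 3)) = (\<Prod>u<N. (of_nat (digit3 (n div 3) u choose digit3 (g div 3) u) :: 'a))"
    using Suc by (intro Suc.IH) auto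
  finally show ?case
    unfolding prod.lessThan_Suc_shift by (simp add: digit3_Suc digit3_0 mult.commute)
qed

lemma exists_lower_digit: "(h::nat) < g \<Longrightarrow> \<exists>u. digit3 h u < digit3 g u"
proof (induction g arbitrary: h rule: less_induct)
  case (less g)
  show ?case
  proof (cases "h div 3 < g div 3")
    case True
    then have "g div 3 < g" using less.prems by simp
    from less.IH[OF this True] obtain u where "digit3 (h div 3) u < digit3 (g div 3) u" by blast
    then show ?thesis by (metis digit3_Suc)
  next
    case False
    then have "h div 3 = g div 3" using less.prems div_le_mono by (metis le_antisym less_imp_le_nat not_less)
    then have "h mod 3 < g mod 3" using less.prems
      by (metis div_mult_mod_eq add_less_cancel_left)
    then show ?thesis by (metis digit3_0)
  qed
qed

lemma digit3_big: "(g::nat) < 3^N \<Longrightarrow> N \<le> u \<Longrightarrow> digit3 g u = 0"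
proof -
  assume "g < 3^N" "N \<le> u"
  then have "g < 3^u" by (meson less_le_trans power_increasing_iff le_refl
      order.trans power_increasing zero_less_numeral one_le_numeral)
  then show ?thesis by (simp add: digit3_def)
qed

lemma two_eq_minus_one: assumes c: "CHAR('a::field) = 3" shows "(2::'a) = -1"
proof -
  have "(of_nat 3 :: 'a) = 0" using c by (metis of_nat_CHAR)
  then have "(2::'a) + 1 = 0" by simp
  then show ?thesis by (simp add: eq_neg_iff_add_eq_0)
qed

lemma cvi_props:
  assumes c: "CHAR('a::field) = 3" and "gu < 3" "nu < 3" "gu \<le> nu"
  shows "(\<forall>d<gu. cvi gu nu d = 0) \<and> (of_int (cvi gu nu gu) :: 'a) = of_nat (nu choose gu)"
proof -
  have "gu = 0 \<or> gu = 1 \<or> gu = 2" "nu = 0 \<or> nu = 1 \<or> nu = 2" using assms by auto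
  then show ?thesis using assms(4) two_eq_minus_one[OF c]
    by (auto simp: cvi_def less_Suc_eq numeral_2_eq_2 numeral_3_eq_3)
qed

theorem lemma3p3:
  fixes l1 l2 g :: nat
  assumes char3: "CHAR('a::field) = 3"
    and part: "l2 \<le> l1"
    and B: "\<not> (3::nat) dvd ((l1 - l2 + 2 * g) choose g)"
  shows "(\<exists>\<alpha> :: nat \<Rightarrow> 'a. (\<forall>i. \<alpha> i \<in> range of_int) \<and>
            (\<forall>h. (eelem l2 (l1 - l2) g :: nat \<Rightarrow> 'a) h =
                 of_nat ((l1 - l2 + 2 * g) choose g) * sbasis l2 g h
                 + (\<Sum>i\<in>{g<..l2}. \<alpha> i * sbasis l2 i h)))
       \<and> ((eelem l2 (l1 - l2) g :: nat \<Rightarrow> 'a) \<noteq> (\<lambda>_. 0) \<longleftrightarrow> g \<le> l2)"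
proof -
  define m where "m = l1 - l2"
  define n where "n = m + 2 * g"
  define N where "N = m + 2 * g + l2 + 1"
  define P where "P = (\<lambda>h. \<Prod>u<N. cvi (digit3 g u) (digit3 n u) (digit3 h u))"
  define e where "e = (eelem l2 m g :: nat \<Rightarrow> 'a)"
  have e_eq: "e h = (if h \<le> l2 then of_int (P h) else 0)" for h
    unfolding e_def P_def N_def n_def by (rule eelem_eq[OF char3])
  have "N < 2^N" by (rule less_exp)
  also have "(2::nat)^N \<le> 3^N" by (rule power_mono) auto
  finally have N3: "N < 3^N" .
  have n3: "n < 3^N" and g3: "g < 3^N" using N3 unfolding N_def n_def by linarith+
  have Bnz: "(of_nat (n choose g) :: 'a) \<noteq> 0"
    using B char3 of_nat_eq_0_iff_char_dvd unfolding n_def m_def by metis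
  have luc: "(of_nat (n choose g) :: 'a) = (\<Prod>u<N. of_nat (digit3 n u choose digit3 g u))"
    by (rule lucas_full[OF char3 n3 g3])
  have dle: "digit3 g u \<le> digit3 n u" if "u < N" for u
  proof (rule ccontr)
    assume "\<not> ?thesis"
    then have "(of_nat (digit3 n u choose digit3 g u) :: 'a) = 0" by (simp add: binomial_eq_0)
    then have "(\<Prod>u<N. (of_nat (digit3 n u choose digit3 g u) :: 'a)) = 0"
      using that by (intro prod_zero) auto
    then show False using Bnz luc by simp
  qed
  have low: "P h = 0" if hg: "h < g" for h
  proof -
    obtain u where u: "digit3 h u < digit3 g u" using exists_lower_digit[OF hg] by blast
    have "u < N"
    proof (rule ccontr)
      assume "\<not> u < N" then have "digit3 g u = 0" using digit3_big[OF g3] by simp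
      then show False using u by simp
    qed
    then have "cvi (digit3 g u) (digit3 n u) (digit3 h u) = 0"
      using cvi_props[OF char3 digit3_lt digit3_lt dle[OF \<open>u < N\<close>]] u by blast
    then show ?thesis unfolding P_def using \<open>u < N\<close> by (intro prod_zero) auto
  qed
  have atg: "(of_int (P g) :: 'a) = of_nat (n choose g)"
  proof -
    have "(of_int (P g) :: 'a) = (\<Prod>u<N. of_int (cvi (digit3 g u) (digit3 n u) (digit3 g u)))"
      by (simp add: P_def)
    also have "\<dots> = (\<Prod>u<N. of_nat (digit3 n u choose digit3 g u))"
      using cvi_props[OF char3 digit3_lt digit3_lt dle] by (intro prod.cong) auto
    finally show ?thesis using luc by simp
  qed
  define \<alpha> where "\<alpha> = (\<lambda>i. (of_int (P i) :: 'a))"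
  have sumeq: "(\<Sum>i\<in>{g<..l2}. \<alpha> i * sbasis l2 i h) = (if g < h \<and> h \<le> l2 then \<alpha> h else 0)" for h
  proof -
    have "(\<Sum>i\<in>{g<..l2}. \<alpha> i * sbasis l2 i h) = (\<Sum>i\<in>{g<..l2}. if i = h then \<alpha> h else 0)"
      by (rule sum.cong) (auto simp: sbasis_def)
    then show ?thesis by simp
  qed
  have part1: "\<forall>h. e h = of_nat (n choose g) * sbasis l2 g h + (\<Sum>i\<in>{g<..l2}. \<alpha> i * sbasis l2 i h)"
  proof
    fix h
    consider "h > l2" | "h \<le> l2" "h < g" | "h \<le> l2" "h = g" | "h \<le> l2" "g < h" by linarith
    then show "e h = of_nat (n choose g) * sbasis l2 g h + (\<Sum>i\<in>{g<..l2}. \<alpha> i * sbasis l2 i h)"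
    proof cases
      case 1 then show ?thesis by (auto simp: e_eq sumeq sbasis_def)
    next
      case 2 then show ?thesis by (simp add: e_eq sumeq sbasis_def low)
    next
      case 3 then show ?thesis by (simp add: e_eq sumeq sbasis_def atg)
    next
      case 4 then show ?thesis by (subst sumeq) (simp add: e_eq sbasis_def \<alpha>_def)
    qed
  qed
  have part2: "e \<noteq> (\<lambda>_. 0) \<longleftrightarrow> g \<le> l2"
  proof
    assume "e \<noteq> (\<lambda>_. 0)"
    then obtain h where h: "e h \<noteq> 0" by auto
    show "g \<le> l2"
    proof (rule ccontr)
      assume "\<not> g \<le> l2"
      then show False using h low by (auto simp: e_eq split: if_splits)
    qed
  next
    assume "g \<le> l2"
    then have "e g \<noteq> 0" using e_eq atg Bnz by simp
    then show "e \<noteq> (\<lambda>_. 0)" by auto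
  qed
  have rng: "\<forall>i. \<alpha> i \<in> range of_int" by (simp add: \<alpha>_def)
  show ?thesis
    using part1 part2 rng unfolding e_def m_def n_def by blast
qed
end
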